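(* For every cardinal $\lambda\geqslant 2$ there is no Hausdorff $d$-feebly compact topological semigroup which contains the $\lambda$-polycyclic monoid $P_\lambda$ as a dense subsemigroup.
   Context: For a non-zero cardinal $\lambda$, the polycyclic monoid $P_\lambda$ is the monoid with zero given by the presentation $\langle \{p_i\}_{i\in\lambda},\{p_i^{-1}\}_{i\in\lambda}\mid p_ip_i^{-1}=1,\ p_ip_j^{-1}=0 \text{ for } i\neq j\rangle$. A topological semigroup is a topological space with a jointly continuous associative operation. A space is $d$-feebly compact if every discrete family of its open subsets is finite. *)

theory Defs
  imports "HOL-Analysis.Analysis"
begin

(* The lambda-polycyclic monoid P_lambda, lambda = cardinality of the type 'i.
   Standard concrete model (Lawson): nonzero elements are pairs of words (u,v),
   None is the zero; generators p_i = Some ([],[i]), p_i^{-1} = Some ([i],[]),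
   identity Some ([],[]). *)
type_synonym 'i polycyclic = "('i list \<times> 'i list) option"

definition pc_mult :: "'i polycyclic \<Rightarrow> 'i polycyclic \<Rightarrow> 'i polycyclic" where
  "pc_mult a b = (case a of None \<Rightarrow> None | Some (u, v) \<Rightarrow>
     (case b of None \<Rightarrow> None | Some (x, y) \<Rightarrow>
       (if (\<exists>w. x = v @ w) then Some (u @ drop (length v) x, y)
        else if (\<exists>w. v = x @ w) then Some (u, y @ drop (length x) v)
        else None)))"

definition pc_one :: "'i polycyclic" where "pc_one = Some ([], [])"
definition pc_gen :: "'i \<Rightarrow> 'i polycyclic" where "pc_gen i = Some ([], [i])"
definition pc_geninv :: "'i \<Rightarrow> 'i polycyclic" where "pc_geninv i = Some ([i], [])"

lemma pc_rel1: "pc_mult (pc_gen i) (pc_geninv i) = pc_one"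
  by (simp add: pc_mult_def pc_gen_def pc_geninv_def pc_one_def)

lemma pc_rel2: "i \<noteq> j \<Longrightarrow> pc_mult (pc_gen i) (pc_geninv j) = None"
  by (simp add: pc_mult_def pc_gen_def pc_geninv_def)

definition topological_semigroup :: "'s topology \<Rightarrow> ('s \<Rightarrow> 's \<Rightarrow> 's) \<Rightarrow> bool" where
  "topological_semigroup X m \<longleftrightarrow>
     (\<forall>x\<in>topspace X. \<forall>y\<in>topspace X. m x y \<in> topspace X) \<and>
     (\<forall>x\<in>topspace X. \<forall>y\<in>topspace X. \<forall>z\<in>topspace X. m (m x y) z = m x (m y z)) \<and>
     continuous_map (prod_topology X X) X (\<lambda>p. m (fst p) (snd p))"

definition discrete_family :: "'s topology \<Rightarrow> 's set set \<Rightarrow> bool" where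
  "discrete_family X \<U> \<longleftrightarrow>
     (\<forall>x\<in>topspace X. \<exists>V. openin X V \<and> x \<in> V \<and>
        (\<forall>U1\<in>\<U>. \<forall>U2\<in>\<U>. U1 \<inter> V \<noteq> {} \<and> U2 \<inter> V \<noteq> {} \<longrightarrow> U1 = U2))"

definition d_feebly_compact :: "'s topology \<Rightarrow> bool" where
  "d_feebly_compact X \<longleftrightarrow>
     (\<forall>\<U>. (\<forall>U\<in>\<U>. openin X U) \<and> discrete_family X \<U> \<longrightarrow> finite \<U>)"

end

theory Submission
  imports Defs
begin


lemma rep_eq_aux:
  assumes "i \<noteq> j"
  shows "replicate n i @ j # w1 = replicate k i @ j # w2 \<Longrightarrow> n = k \<and> w1 = w2"
proof (induction n arbitrary: k)
  case 0 then show ?case using assms by (cases k) simp_all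
next
  case (Suc n)
  show ?case
  proof (cases k)
    case 0 then show ?thesis using Suc.prems assms by simp
  next
    case (Suc k')
    then have "replicate n i @ j # w1 = replicate k' i @ j # w2" using Suc.prems by simp
    then have "n = k' \<and> w1 = w2" by (rule Suc.IH)
    then show ?thesis using Suc by simp
  qed
qed

definition wd :: "'i \<Rightarrow> 'i \<Rightarrow> nat \<Rightarrow> 'i list" where "wd i j n = replicate n i @ [j]"

lemma wd_prefix: "i \<noteq> j \<Longrightarrow> wd i j k = wd i j n @ w \<Longrightarrow> n = k"
proof -
  assume ij: "i \<noteq> j" and e: "wd i j k = wd i j n @ w"
  have "replicate n i @ j # w = replicate k i @ j # []" using e by (simp add: wd_def)
  then show "n = k" using rep_eq_aux[OF ij] by blast
qed

lemma wd_inj: "i \<noteq> j \<Longrightarrow> wd i j k = wd i j n \<Longrightarrow> n = k"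
  using wd_prefix[of i j k n "[]"] by simp

lemma ff_orth: "i \<noteq> j \<Longrightarrow> n \<noteq> k \<Longrightarrow>
   pc_mult (Some (wd i j n, wd i j n)) (Some (wd i j k, wd i j k)) = None"
proof -
  assume ij: "i \<noteq> j" and nk: "n \<noteq> k"
  have 1: "\<not> (\<exists>w. wd i j k = wd i j n @ w)" using wd_prefix[OF ij, of k n] nk by blast
  have 2: "\<not> (\<exists>w. wd i j n = wd i j k @ w)" using wd_prefix[OF ij, of n k] nk by blast
  show ?thesis unfolding pc_mult_def using 1 2 by simp
qed

lemma ff_idem: "pc_mult (Some (w, w)) (Some (w, w)) = Some (w, w)"
  unfolding pc_mult_def by auto

lemma af: "pc_mult (Some ([j], w)) (Some (w, w)) = Some ([j], w)"
  unfolding pc_mult_def by auto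

lemma fb: "pc_mult (Some (w, w)) (Some (w, [j])) = Some (w, [j])"
  unfolding pc_mult_def by auto

lemma ab: "pc_mult (Some ([j], w)) (Some (w, [j])) = Some ([j], [j])"
  unfolding pc_mult_def by auto

lemma one_classes:
  assumes "i \<noteq> j" "x \<noteq> pc_one"
  shows "x = None \<or> pc_mult (Some ([j],[j])) x = None \<or> pc_mult (Some ([i],[i])) x = None
     \<or> pc_mult x (Some ([j],[j])) = None \<or> pc_mult x (Some ([i],[i])) = None"
proof (cases x)
  case (Some p)
  obtain u v where p: "p = (u, v)" by fastforce
  have "u \<noteq> [] \<or> v \<noteq> []" using assms Some p by (auto simp: pc_one_def)
  then show ?thesis
  proof
    assume "u \<noteq> []"
    then obtain c u' where "u = c # u'" by (cases u) auto
    then show ?thesis using Some p assms by (cases "c = i") (auto simp: pc_mult_def)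
  next
    assume "v \<noteq> []"
    then obtain c v' where "v = c # v'" by (cases v) auto
    then show ?thesis using Some p assms by (cases "c = i") (auto simp: pc_mult_def)
  qed
qed simp

lemma ext_char:
  assumes "pc_mult (pc_mult (Some ([], u)) x) (Some (v, [])) = pc_one"
  shows "x \<in> {Some (X, Y) | X Y r. u = X @ r \<and> v = Y @ r}"
  using assms
  by (cases x) (auto simp: pc_mult_def pc_one_def split: if_splits)

lemma ext_one: "pc_mult (pc_mult (Some ([], u)) (Some (u, v))) (Some (v, [])) = pc_one"
  by (auto simp: pc_mult_def pc_one_def)

lemma ext_finite: "finite {Some (X, Y) | X Y r. u = X @ r \<and> v = Y @ r}"
proof -
  have "{Some (X, Y) | X Y r. u = X @ r \<and> v = Y @ r} \<subseteq>
        Some ` ((\<lambda>k. take k u) ` {..length u} \<times> (\<lambda>k. take k v) ` {..length v})"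
  proof
    fix z assume "z \<in> {Some (X, Y) | X Y r. u = X @ r \<and> v = Y @ r}"
    then obtain X Y r where z: "z = Some (X, Y)" "u = X @ r" "v = Y @ r" by blast
    have "X \<in> (\<lambda>k. take k u) ` {..length u}"
      by (rule rev_image_eqI[of "length X"]) (auto simp: z)
    moreover have "Y \<in> (\<lambda>k. take k v) ` {..length v}"
      by (rule rev_image_eqI[of "length Y"]) (auto simp: z)
    ultimately show "z \<in> Some ` ((\<lambda>k. take k u) ` {..length u} \<times> (\<lambda>k. take k v) ` {..length v})"
      using z by auto
  qed
  then show ?thesis by (rule finite_subset) auto
qed



locale PCS =
  fixes X :: "'s topology" and m :: "'s \<Rightarrow> 's \<Rightarrow> 's" and h :: "'i polycyclic \<Rightarrow> 's"
    and i j :: 'i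
  assumes ij: "i \<noteq> j" and haus: "Hausdorff_space X" and dfc: "d_feebly_compact X"
    and ts: "topological_semigroup X m" and hsub: "h ` UNIV \<subseteq> topspace X" and hinj: "inj h"
    and hom: "\<And>a b. h (pc_mult a b) = m (h a) (h b)"
    and dense: "X closure_of (h ` UNIV) = topspace X"
begin

lemma hT[simp]: "h x \<in> topspace X" using hsub by auto

lemma t1: "t1_space X" using haus Hausdorff_imp_t1_space by blast

lemma cmul: "continuous_map (prod_topology X X) X (\<lambda>p. m (fst p) (snd p))"
  using ts unfolding topological_semigroup_def by blast

lemma cont2:
  assumes "continuous_map X X F" "continuous_map X X G"
  shows "continuous_map X X (\<lambda>t. m (F t) (G t))"
  using continuous_map_compose[OF continuous_map_pairedI[OF assms] cmul] by (simp add: o_def)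

lemma cconst: "c \<in> topspace X \<Longrightarrow> continuous_map X X (\<lambda>t. c)" by simp

lemma closed_eq:
  assumes "continuous_map X X F" "continuous_map X X G"
  shows "closedin X {t \<in> topspace X. F t = G t}"
  by (rule closedin_continuous_maps_eq[OF haus assms])

lemma closure_sub:
  assumes "closedin X C" "h ` S \<subseteq> C"
  shows "X closure_of (h ` S) \<subseteq> C"
  using closure_of_minimal[OF assms(2) assms(1)] .

lemma zero_r: "t \<in> topspace X \<Longrightarrow> m t (h None) = h None"
proof -
  let ?S = "{t \<in> topspace X. m t (h None) = h None}"
  have c: "closedin X ?S"
    by (rule closed_eq) (auto intro!: cont2 continuous_map_id[unfolded id_def])
  have "h ` UNIV \<subseteq> ?S" using hom[symmetric] by (auto simp: pc_mult_def split: option.splits)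
  then have "X closure_of (h ` UNIV) \<subseteq> ?S" by (rule closure_sub[OF c])
  then have "topspace X \<subseteq> ?S" by (simp only: dense)
  then show "t \<in> topspace X \<Longrightarrow> ?thesis" by blast
qed

lemma zero_l: "t \<in> topspace X \<Longrightarrow> m (h None) t = h None"
proof -
  let ?S = "{t \<in> topspace X. m (h None) t = h None}"
  have c: "closedin X ?S"
    by (rule closed_eq) (auto intro!: cont2 continuous_map_id[unfolded id_def])
  have "h ` UNIV \<subseteq> ?S" using hom[symmetric] by (auto simp: pc_mult_def split: option.splits)
  then have "X closure_of (h ` UNIV) \<subseteq> ?S" by (rule closure_sub[OF c])
  then have "topspace X \<subseteq> ?S" by (simp only: dense)
  then show "t \<in> topspace X \<Longrightarrow> ?thesis" by blast
qed

lemma in_cl: "x \<in> S \<Longrightarrow> h x \<in> X closure_of (h ` S)"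
proof -
  assume x: "x \<in> S"
  have "h ` S \<subseteq> topspace X" using hsub by blast
  then have "h ` S \<subseteq> X closure_of (h ` S)" by (rule closure_of_subset)
  moreover have "h x \<in> h ` S" using x by (rule imageI)
  ultimately show ?thesis by (rule subsetD)
qed

lemma isolate_crit:
  assumes "h b \<notin> X closure_of (h ` (UNIV - {b}))"
  shows "openin X {h b}"
proof -
  let ?C = "X closure_of (h ` (UNIV - {b}))"
  define U where "U = topspace X - ?C"
  have oU: "openin X U" unfolding U_def by (rule openin_diff) auto
  have bU: "h b \<in> U" using assms by (simp add: U_def)
  have sub: "U \<inter> h ` UNIV \<subseteq> {h b}"
  proof
    fix t assume "t \<in> U \<inter> h ` UNIV"
    then obtain x where x: "t = h x" "t \<in> U" by blast
    show "t \<in> {h b}"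
    proof (cases "x = b")
      case False
      then have "x \<in> UNIV - {b}" by simp
      then have "h x \<in> ?C" by (rule in_cl)
      then show ?thesis using x U_def by auto
    qed (use x in auto)
  qed
  have "U \<subseteq> {h b}"
  proof -
    have "U = U \<inter> X closure_of (h ` UNIV)" using dense U_def by auto
    also have "\<dots> \<subseteq> X closure_of (U \<inter> h ` UNIV)" by (rule openin_Int_closure_of_subset[OF oU])
    also have "\<dots> \<subseteq> X closure_of {h b}" by (rule closure_of_mono[OF sub])
    also have "\<dots> = {h b}" by (rule closure_of_closedin[OF closedin_t1_singleton[OF t1 hT]])
    finally show ?thesis .
  qed
  then have "U = {h b}" using bU by blast
  then show ?thesis using oU by simp
qed

lemma one_notin: "h pc_one \<notin> X closure_of (h ` (UNIV - {pc_one}))"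
proof -
  define ei :: "'i polycyclic" where "ei = Some ([i],[i])"
  define ej :: "'i polycyclic" where "ej = Some ([j],[j])"
  let ?Z = "\<lambda>F. {t \<in> topspace X. F t = h None}"
  let ?C = "{h None} \<union> ?Z (\<lambda>t. m (h ej) t) \<union> ?Z (\<lambda>t. m (h ei) t)
           \<union> ?Z (\<lambda>t. m t (h ej)) \<union> ?Z (\<lambda>t. m t (h ei))"
  have cz: "closedin X (?Z F)" if "continuous_map X X F" for F
    by (rule closed_eq[OF that]) auto
  have cC: "closedin X ?C"
    by (intro closedin_Un cz closedin_t1_singleton[OF t1 hT] cont2 continuous_map_id[unfolded id_def]) auto
  have "h ` (UNIV - {pc_one}) \<subseteq> ?C"
  proof
    fix t assume "t \<in> h ` (UNIV - {pc_one})"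
    then obtain x where x: "t = h x" "x \<noteq> pc_one" by blast
    from one_classes[OF ij x(2)] show "t \<in> ?C"
      unfolding x(1) ei_def[symmetric] ej_def[symmetric] by (auto simp: hom[symmetric])
  qed
  then have "X closure_of (h ` (UNIV - {pc_one})) \<subseteq> ?C" by (rule closure_sub[OF cC])
  moreover have "h pc_one \<notin> ?C"
  proof -
    have "h pc_one \<noteq> h None" using hinj by (auto simp: pc_one_def dest: injD)
    moreover have "\<And>e. e \<in> {ei, ej} \<Longrightarrow> m (h e) (h pc_one) \<noteq> h None \<and> m (h pc_one) (h e) \<noteq> h None"
      unfolding hom[symmetric] using hinj
      by (auto simp: pc_mult_def pc_one_def ei_def ej_def dest: injD)
    ultimately show ?thesis by auto
  qed
  ultimately show ?thesis by blast
qed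

lemma one_iso: "openin X {h pc_one}"
  by (rule isolate_crit[OF one_notin])

lemma iso:
  assumes "b \<noteq> None"
  shows "openin X {h b}"
proof -
  obtain u v where b: "b = Some (u, v)" using assms by fastforce
  define c :: "'i polycyclic" where "c = Some ([], u)"
  define d :: "'i polycyclic" where "d = Some (v, [])"
  define Ext where "Ext = {Some (X, Y) | X Y r. u = X @ r \<and> v = Y @ r}"
  let ?C1 = "X closure_of (h ` (UNIV - {pc_one}))"
  let ?K = "\<lambda>t. m (m (h c) t) (h d)"
  let ?Z = "{t \<in> topspace X. ?K t \<in> ?C1}"
  have cK: "continuous_map X X ?K"
    by (intro cont2 continuous_map_id[unfolded id_def]) auto
  have cZ: "closedin X ?Z"
    by (rule closedin_continuous_map_preimage[OF cK]) auto
  have fE: "finite (h ` (Ext - {b}))" unfolding Ext_def using ext_finite by blast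
  have cE: "closedin X (h ` (Ext - {b}))"
    by (rule closedin_Hausdorff_finite[OF haus _ fE]) auto
  have "h ` (UNIV - {b}) \<subseteq> ?Z \<union> h ` (Ext - {b})"
  proof
    fix t assume "t \<in> h ` (UNIV - {b})"
    then obtain x where x: "t = h x" "x \<noteq> b" by blast
    show "t \<in> ?Z \<union> h ` (Ext - {b})"
    proof (cases "pc_mult (pc_mult c x) d = pc_one")
      case True
      then have "x \<in> Ext" unfolding Ext_def c_def d_def by (rule ext_char)
      then show ?thesis using x by blast
    next
      case False
      then have "pc_mult (pc_mult c x) d \<in> UNIV - {pc_one}" by simp
      then have "h (pc_mult (pc_mult c x) d) \<in> ?C1" by (rule in_cl)
      then show ?thesis using x by (simp add: hom)
    qed
  qed
  then have "X closure_of (h ` (UNIV - {b})) \<subseteq> ?Z \<union> h ` (Ext - {b})"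
    by (rule closure_sub[OF closedin_Un[OF cZ cE]])
  moreover have "h b \<notin> ?Z"
  proof -
    have "?K (h b) = h pc_one"
      unfolding hom[symmetric] b c_def d_def by (simp only: ext_one)
    then show ?thesis using one_notin by auto
  qed
  moreover have "h b \<notin> h ` (Ext - {b})" using hinj by (auto dest: injD)
  ultimately show ?thesis using isolate_crit by blast
qed


lemma acc:
  assumes inj: "inj_on g N" and inf: "infinite N" and nz: "\<And>n. n \<in> N \<Longrightarrow> g n \<noteq> None"
  shows "\<exists>s\<in>topspace X. \<forall>T. finite T \<longrightarrow> s \<in> X closure_of (h ` g ` (N - T))"
proof -
  define U where "U = (\<lambda>n. {h (g n)}) ` N"
  have oU: "\<forall>V\<in>U. openin X V" using iso nz by (auto simp: U_def)
  have "inj_on (\<lambda>n. {h (g n)}) N"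
  proof (rule inj_onI)
    fix x y assume xy: "x \<in> N" "y \<in> N" "{h (g x)} = {h (g y)}"
    then have "h (g x) = h (g y)" by simp
    then have "g x = g y" using hinj by (simp add: inj_eq)
    then show "x = y" using inj xy by (simp add: inj_on_eq_iff)
  qed
  then have "infinite U" unfolding U_def using inf finite_imageD by blast
  moreover have "discrete_family X U \<Longrightarrow> finite U"
    using spec[OF dfc[unfolded d_feebly_compact_def], of U] oU by simp
  ultimately have "\<not> discrete_family X U" by blast
  then have "\<exists>s\<in>topspace X. \<not> (\<exists>V. openin X V \<and> s \<in> V \<and>
        (\<forall>U1\<in>U. \<forall>U2\<in>U. U1 \<inter> V \<noteq> {} \<and> U2 \<inter> V \<noteq> {} \<longrightarrow> U1 = U2))"
    unfolding discrete_family_def by (simp only: ball_simps(10))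
  then obtain s where s: "s \<in> topspace X" and ns: "\<not> (\<exists>V. openin X V \<and> s \<in> V \<and>
        (\<forall>U1\<in>U. \<forall>U2\<in>U. U1 \<inter> V \<noteq> {} \<and> U2 \<inter> V \<noteq> {} \<longrightarrow> U1 = U2))"
    by (rule bexE)
  have sV: "\<exists>U1\<in>U. \<exists>U2\<in>U. U1 \<inter> V \<noteq> {} \<and> U2 \<inter> V \<noteq> {} \<and> U1 \<noteq> U2"
    if "openin X V" "s \<in> V" for V
    using ns that by blast
  have cl: "s \<in> X closure_of (h ` g ` (N - T))" if fT: "finite T" for T
  proof (rule ccontr)
    assume "s \<notin> X closure_of (h ` g ` (N - T))"
    then obtain V where V: "openin X V" "s \<in> V" and dV: "\<forall>y\<in>h ` g ` (N - T). y \<notin> V"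
      using s unfolding in_closure_of by blast
    define F where "F = h ` g ` (N \<inter> T) - {s}"
    have "finite F" unfolding F_def using fT by auto
    then have cF: "closedin X F" by (intro closedin_Hausdorff_finite[OF haus]) (auto simp: F_def)
    have oV': "openin X (V - F)" by (rule openin_diff[OF V(1) cF])
    have sV': "s \<in> V - F" using V by (auto simp: F_def)
    have key: "\<And>n. n \<in> N \<Longrightarrow> h (g n) \<in> V - F \<Longrightarrow> h (g n) = s"
    proof -
      fix n assume n: "n \<in> N" "h (g n) \<in> V - F"
      show "h (g n) = s"
      proof (cases "n \<in> T")
        case True then show ?thesis using n by (auto simp: F_def)
      next
        case False then show ?thesis using n dV by auto
      qed
    qed
    from sV[OF oV' sV'] obtain U1 U2 where U12: "U1 \<in> U" "U2 \<in> U" "U1 \<inter> (V - F) \<noteq> {}"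
      "U2 \<inter> (V - F) \<noteq> {}" "U1 \<noteq> U2" by blast
    from U12(1) obtain n1 where n1: "n1 \<in> N" "U1 = {h (g n1)}" unfolding U_def by blast
    from U12(2) obtain n2 where n2: "n2 \<in> N" "U2 = {h (g n2)}" unfolding U_def by blast
    have "h (g n1) \<in> V - F" using U12(3) n1 by simp
    then have e1: "h (g n1) = s" using key n1 by blast
    have "h (g n2) \<in> V - F" using U12(4) n2 by simp
    then have e2: "h (g n2) = s" using key n2 by blast
    show False using U12(5) n1 n2 e1 e2 by simp
  qed
  have "\<forall>T. finite T \<longrightarrow> s \<in> X closure_of (h ` g ` (N - T))"
    using cl by simp
  then show ?thesis by (rule bexI[OF _ s])
qed

definition "ff n = Some (wd i j n, wd i j n)"
definition "aa n = Some ([j], wd i j n)"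
definition "bb n = Some (wd i j n, [j])"

lemma ff_inj: "inj ff" unfolding inj_def ff_def using wd_inj[OF ij] by auto
lemma aa_inj: "inj aa" unfolding inj_def aa_def using wd_inj[OF ij] by auto
lemma bb_inj: "inj bb" unfolding inj_def bb_def using wd_inj[OF ij] by auto

lemma conv_ff:
  assumes V: "openin X V" "h None \<in> V"
  shows "finite {n. h (ff n) \<notin> V}"
proof (rule ccontr)
  let ?N = "{n. h (ff n) \<notin> V}"
  assume inf: "infinite ?N"
  obtain s where s: "s \<in> topspace X" and sc: "\<And>T. finite T \<Longrightarrow> s \<in> X closure_of (h ` ff ` (?N - T))"
    using acc[OF inj_on_subset[OF ff_inj subset_UNIV] inf] by (auto simp: ff_def)
  have cV: "closedin X (topspace X - V)" using V by auto
  have sub: "h ` ff ` ?N \<subseteq> topspace X - V" by auto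
  have "s \<in> topspace X - V" using subsetD[OF closure_sub[OF cV sub] sc[of "{}", simplified]] by auto
  moreover have "s = h None"
  proof -
    let ?S1 = "{t \<in> topspace X. m t t = t}"
    have c1: "closedin X ?S1" by (rule closed_eq) (auto intro!: cont2 continuous_map_id[unfolded id_def])
    have sub: "h ` (ff ` ?N) \<subseteq> ?S1" by (auto simp: hom[symmetric] ff_def ff_idem)
    have e1: "m s s = s" using subsetD[OF closure_sub[OF c1 sub] sc[of "{}", simplified]] by auto
    have e2: "m s (h (ff k)) = h None" for k
    proof -
      let ?S = "{t \<in> topspace X. m t (h (ff k)) = h None}"
      have c: "closedin X ?S" by (rule closed_eq) (auto intro!: cont2 continuous_map_id[unfolded id_def])
      have sub: "h ` (ff ` (?N - {k})) \<subseteq> ?S" using ff_orth[OF ij] by (auto simp: hom[symmetric] ff_def)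
      show ?thesis using subsetD[OF closure_sub[OF c sub] sc[of "{k}", simplified]] by auto
    qed
    let ?S2 = "{t \<in> topspace X. m s t = h None}"
    have c2: "closedin X ?S2" by (rule closed_eq) (use s in \<open>auto intro!: cont2 continuous_map_id[unfolded id_def]\<close>)
    have sub: "h ` (ff ` ?N) \<subseteq> ?S2" using e2 by auto
    have "m s s = h None" using subsetD[OF closure_sub[OF c2 sub] sc[of "{}", simplified]] s by auto
    then show ?thesis using e1 by simp
  qed
  ultimately show False using V by auto
qed

lemma nbhd_mult:
  assumes "openin X Q" "x \<in> topspace X" "y \<in> topspace X" "m x y \<in> Q"
  obtains W1 W2 where "openin X W1" "openin X W2" "x \<in> W1" "y \<in> W2"
    "\<And>a b. a \<in> W1 \<Longrightarrow> b \<in> W2 \<Longrightarrow> m a b \<in> Q"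
proof -
  define P where "P = {p \<in> topspace (prod_topology X X). m (fst p) (snd p) \<in> Q}"
  have oP: "openin (prod_topology X X) P"
    unfolding P_def by (rule openin_continuous_map_preimage[OF cmul assms(1)])
  have mem: "(x, y) \<in> P"
    using assms by (simp add: P_def)
  have "\<exists>U V. openin X U \<and> openin X V \<and> x \<in> U \<and> y \<in> V \<and> U \<times> V \<subseteq> P"
    using oP[unfolded openin_prod_topology_alt, rule_format, OF mem] .
  then obtain W1 W2 where W: "openin X W1" "openin X W2" "x \<in> W1" "y \<in> W2"
    "W1 \<times> W2 \<subseteq> P" by (elim exE conjE)
  have "\<And>a b. a \<in> W1 \<Longrightarrow> b \<in> W2 \<Longrightarrow> m a b \<in> Q"
  proof -
    fix a b assume "a \<in> W1" "b \<in> W2"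
    then have "(a, b) \<in> W1 \<times> W2" by simp
    then have "(a, b) \<in> P" using W(5) by (rule subsetD[rotated])
    then show "m a b \<in> Q" by (simp add: P_def)
  qed
  then show ?thesis using that W(1-4) by blast
qed

lemma conv_aa:
  assumes V: "openin X V" "h None \<in> V"
  shows "finite {n. h (aa n) \<notin> V}"
proof (rule ccontr)
  let ?N = "{n. h (aa n) \<notin> V}"
  assume inf: "infinite ?N"
  obtain s where s: "s \<in> topspace X" and sc: "\<And>T. finite T \<Longrightarrow> s \<in> X closure_of (h ` aa ` (?N - T))"
    using acc[OF inj_on_subset[OF aa_inj subset_UNIV] inf] by (auto simp: aa_def)
  have cV: "closedin X (topspace X - V)" using V by auto
  have sub: "h ` aa ` ?N \<subseteq> topspace X - V" by auto
  have sn: "s \<in> topspace X - V" using subsetD[OF closure_sub[OF cV sub] sc[of "{}", simplified]] by auto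
  then have "s \<noteq> h None" using V by auto
  then obtain W Q where WO: "openin X W" "openin X Q" "s \<in> W" "h None \<in> Q" "disjnt W Q"
    using haus[unfolded Hausdorff_space_def, rule_format, of s "h None"] s hT \<open>s \<noteq> h None\<close> by blast
  have mO: "m s (h None) \<in> Q" using zero_r[OF s] WO by simp
  obtain W1 W2 where W: "openin X W1" "openin X W2" "s \<in> W1" "h None \<in> W2"
    "\<And>a b. a \<in> W1 \<Longrightarrow> b \<in> W2 \<Longrightarrow> m a b \<in> Q"
    by (rule nbhd_mult[OF WO(2) s hT mO]) blast
  define E where "E = {n. h (ff n) \<notin> W2}"
  have fE: "finite E" unfolding E_def by (rule conv_ff[OF W(2,4)])
  have "s \<in> X closure_of (h ` aa ` (?N - E))" by (rule sc[OF fE])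
  moreover have "openin X (W \<inter> W1)" "s \<in> W \<inter> W1" using WO W by auto
  ultimately obtain y where "y \<in> h ` aa ` (?N - E)" "y \<in> W \<inter> W1"
    unfolding in_closure_of by blast
  then obtain n where n: "n \<notin> E" "h (aa n) \<in> W" "h (aa n) \<in> W1" by blast
  have "h (ff n) \<in> W2" using n E_def by auto
  then have "m (h (aa n)) (h (ff n)) \<in> Q" using W n by blast
  then have "h (aa n) \<in> Q" by (simp add: hom[symmetric] aa_def ff_def af)
  then show False using n WO by (auto simp: disjnt_def)
qed

lemma conv_bb:
  assumes V: "openin X V" "h None \<in> V"
  shows "finite {n. h (bb n) \<notin> V}"
proof (rule ccontr)
  let ?N = "{n. h (bb n) \<notin> V}"
  assume inf: "infinite ?N"
  obtain s where s: "s \<in> topspace X" and sc: "\<And>T. finite T \<Longrightarrow> s \<in> X closure_of (h ` bb ` (?N - T))"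
    using acc[OF inj_on_subset[OF bb_inj subset_UNIV] inf] by (auto simp: bb_def)
  have cV: "closedin X (topspace X - V)" using V by auto
  have sub: "h ` bb ` ?N \<subseteq> topspace X - V" by auto
  have sn: "s \<in> topspace X - V" using subsetD[OF closure_sub[OF cV sub] sc[of "{}", simplified]] by auto
  then have "s \<noteq> h None" using V by auto
  then obtain W Q where WO: "openin X W" "openin X Q" "s \<in> W" "h None \<in> Q" "disjnt W Q"
    using haus[unfolded Hausdorff_space_def, rule_format, of s "h None"] s hT \<open>s \<noteq> h None\<close> by blast
  have mO: "m (h None) s \<in> Q" using zero_l[OF s] WO by simp
  obtain W1 W2 where W: "openin X W1" "openin X W2" "h None \<in> W1" "s \<in> W2"
    "\<And>a b. a \<in> W1 \<Longrightarrow> b \<in> W2 \<Longrightarrow> m a b \<in> Q"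
    by (rule nbhd_mult[OF WO(2) hT s mO]) blast
  define E where "E = {n. h (ff n) \<notin> W1}"
  have fE: "finite E" unfolding E_def by (rule conv_ff[OF W(1,3)])
  have "s \<in> X closure_of (h ` bb ` (?N - E))" by (rule sc[OF fE])
  moreover have "openin X (W \<inter> W2)" "s \<in> W \<inter> W2" using WO W by auto
  ultimately obtain y where "y \<in> h ` bb ` (?N - E)" "y \<in> W \<inter> W2"
    unfolding in_closure_of by blast
  then obtain n where n: "n \<notin> E" "h (bb n) \<in> W" "h (bb n) \<in> W2" by blast
  have "h (ff n) \<in> W1" using n E_def by auto
  then have "m (h (ff n)) (h (bb n)) \<in> Q" using W n by blast
  then have "h (bb n) \<in> Q" by (simp add: hom[symmetric] bb_def ff_def fb)
  then show False using n WO by (auto simp: disjnt_def)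
qed

lemma contradiction: False
proof -
  define e :: "'i polycyclic" where "e = Some ([j],[j])"
  have ne: "h None \<noteq> h e" using hinj by (auto simp: e_def dest: injD)
  obtain Q Q' where OO: "openin X Q" "openin X Q'" "h None \<in> Q" "h e \<in> Q'" "disjnt Q Q'"
    using haus[unfolded Hausdorff_space_def, rule_format, of "h None" "h e"] hT ne by blast
  have mO: "m (h None) (h None) \<in> Q" using zero_r OO by simp
  obtain W1 W2 where W: "openin X W1" "openin X W2" "h None \<in> W1" "h None \<in> W2"
    "\<And>a b. a \<in> W1 \<Longrightarrow> b \<in> W2 \<Longrightarrow> m a b \<in> Q"
    by (rule nbhd_mult[OF OO(1) hT hT mO]) blast
  have "finite ({n. h (aa n) \<notin> W1} \<union> {n. h (bb n) \<notin> W2})"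
    using conv_aa[OF W(1,3)] conv_bb[OF W(2,4)] by blast
  then obtain n where "n \<notin> {n. h (aa n) \<notin> W1} \<union> {n. h (bb n) \<notin> W2}"
    using ex_new_if_finite[OF infinite_UNIV_nat] by blast
  then have "m (h (aa n)) (h (bb n)) \<in> Q" using W by auto
  then have "h e \<in> Q" by (simp add: hom[symmetric] aa_def bb_def ab e_def)
  then show False using OO by (auto simp: disjnt_def)
qed

end

theorem corollary13:
  fixes X :: "'s topology" and m :: "'s \<Rightarrow> 's \<Rightarrow> 's" and h :: "'i polycyclic \<Rightarrow> 's"
  assumes "\<exists>a b :: 'i. a \<noteq> b"
  shows "\<not> (Hausdorff_space X \<and> d_feebly_compact X \<and> topological_semigroup X m \<and>
            h ` UNIV \<subseteq> topspace X \<and> inj h \<and>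
            (\<forall>a b. h (pc_mult a b) = m (h a) (h b)) \<and>
            X closure_of (h ` UNIV) = topspace X)"
proof
  assume H: "Hausdorff_space X \<and> d_feebly_compact X \<and> topological_semigroup X m \<and>
            h ` UNIV \<subseteq> topspace X \<and> inj h \<and>
            (\<forall>a b. h (pc_mult a b) = m (h a) (h b)) \<and>
            X closure_of (h ` UNIV) = topspace X"
  obtain i j :: 'i where ij: "i \<noteq> j" using assms by blast
  interpret PCS X m h i j
    by unfold_locales (use H ij in auto)
  show False by (rule contradiction)
qed

end
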